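(* Under the hypothesis that $\sum_{k=1}^\infty\bar\lambda^X_k\mathbf 1(\bar\lambda^X_k<e^{-x})=\varphi(x)$, $x\ge0$, for some slowly varying function $\varphi$, for every $\varepsilon\in(0,1)$ the sequence $(\ln n^{X_d}(\varepsilon))_{d\in\mathbb N}$ is rapidly varying: $$\lim_{d\to\infty}\frac{\ln n^{X_{\lfloor cd\rfloor}}(\varepsilon)}{\ln n^{X_d}(\varepsilon)}=\infty\quad\text{for all }c>1.$$
   Context: Let $X$ be a centered random element of a separable Hilbert space $H$ with $\mathbb E\|X\|^2<\infty$, covariance eigenvalues $\lambda^X_1\ge\lambda^X_2\ge\dots\ge0$ (with multiplicity, padded with zeros), $\lambda^X_1>0$, trace $\Lambda^X$, and $\bar\lambda^X_k=\lambda^X_k/\Lambda^X$. $X_d=X^{\otimes d}$ is the centered random element of $H^{\otimes d}$ with covariance operator $(K^X)^{\otimes d}$; its eigenvalues are $\prod_{j=1}^d\lambda^X_{k_j}$. With $\bar\lambda^{X_d}_k$ the normalized nonincreasing eigenvalues of $X_d$, $n^{X_d}(\varepsilon)=\min\{n\in\mathbb N:\sum_{k>n}\bar\lambda^{X_d}_k\le\varepsilon^2\}$. A slowly varying function is a positive measurable $\varphi$ on some $[T,\infty)$ with $\varphi(cx)/\varphi(x)\to1$ as $x\to\infty$ for every $c>0$. $\lfloor\cdot\rfloor$ is the floor function. *)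

theory Defs
  imports "HOL-Analysis.Analysis"
begin

text \<open>Eigenvalues of the covariance of X are given as a sequence lam :: nat => real,
  0-indexed: lam 0 is lambda_1. Trace Lambda = suminf lam.\<close>

definition trace_ev :: "(nat \<Rightarrow> real) \<Rightarrow> real" where
  "trace_ev lam = (\<Sum>k. lam k)"

definition norm_ev :: "(nat \<Rightarrow> real) \<Rightarrow> nat \<Rightarrow> real" where
  "norm_ev lam k = lam k / trace_ev lam"

text \<open>Nonincreasing rearrangement (0-indexed, counted with multiplicity) of a
  nonnegative family f on an index set A: the k-th largest value.\<close>

definition dec_rearr :: "'i set \<Rightarrow> ('i \<Rightarrow> real) \<Rightarrow> nat \<Rightarrow> real" where
  "dec_rearr A f k = Inf {t. 0 \<le> t \<and> finite {i\<in>A. f i > t} \<and> card {i\<in>A. f i > t} \<le> k}"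

text \<open>Eigenvalues of X_d = X^{\<otimes>d}: indexed by tuples (k_1..k_d), i.e. lists of length d;
  normalized eigenvalue is the product of the normalized eigenvalues of X.\<close>

definition tensor_index :: "nat \<Rightarrow> nat list set" where
  "tensor_index d = {ks. length ks = d}"

definition tensor_norm_ev :: "(nat \<Rightarrow> real) \<Rightarrow> nat \<Rightarrow> nat \<Rightarrow> real" where
  "tensor_norm_ev lam d = dec_rearr (tensor_index d) (\<lambda>ks. prod_list (map (norm_ev lam) ks))"

text \<open>Tail sum  sum_{k>n} barlambda^{X_d}_k (1-indexed) = sum over 0-indexed k >= n.\<close>

definition tensor_tail :: "(nat \<Rightarrow> real) \<Rightarrow> nat \<Rightarrow> nat \<Rightarrow> real" where
  "tensor_tail lam d n = (\<Sum>k. tensor_norm_ev lam d (k + n))"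

definition n_X :: "(nat \<Rightarrow> real) \<Rightarrow> nat \<Rightarrow> real \<Rightarrow> nat" where
  "n_X lam d \<epsilon> = (LEAST n. tensor_tail lam d n \<le> \<epsilon>\<^sup>2)"

definition slowly_varying :: "real \<Rightarrow> (real \<Rightarrow> real) \<Rightarrow> bool" where
  "slowly_varying T \<phi> \<longleftrightarrow> (\<forall>x\<ge>T. \<phi> x > 0) \<and>
     \<phi> \<in> borel_measurable (restrict_space borel {T..}) \<and>
     (\<forall>c>0. ((\<lambda>x. \<phi> (c * x) / \<phi> x) \<longlongrightarrow> 1) at_top)"

end

theory Submission
  imports Defs
begin


lemma sorted_enum:
  fixes f :: "'i \<Rightarrow> real"
  assumes "finite S"
  obtains xs where "distinct xs" "set xs = S"
    "\<And>i l. i \<le> l \<Longrightarrow> l < length xs \<Longrightarrow> f (xs!l) \<le> f (xs!i)"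
proof -
  obtain ys where ys: "distinct ys" "set ys = S" using finite_distinct_list[OF assms] by blast
  let ?xs = "sort_key (\<lambda>i. - f i) ys"
  have d: "distinct ?xs" using ys by simp
  have s: "set ?xs = S" using ys by simp
  have so: "sorted (map (\<lambda>i. - f i) ?xs)" by (rule sorted_sort_key)
  have "f (?xs!l) \<le> f (?xs!i)" if "i \<le> l" "l < length ?xs" for i l
  proof -
    have "(map (\<lambda>i. - f i) ?xs)!i \<le> (map (\<lambda>i. - f i) ?xs)!l"
      using sorted_nth_mono[OF so] that by simp
    thus ?thesis using that by simp
  qed
  thus ?thesis using that d s by blast
qed

context
  fixes A :: "'i set" and f :: "'i \<Rightarrow> real"
  assumes fnn: "\<And>i. i \<in> A \<Longrightarrow> 0 \<le> f i"
    and fle: "\<And>i. i \<in> A \<Longrightarrow> f i \<le> 1"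
    and ffin: "\<And>t. t > 0 \<Longrightarrow> finite {i\<in>A. f i > t}"
    and fsum: "\<And>S. finite S \<Longrightarrow> S \<subseteq> A \<Longrightarrow> sum f S \<le> 1"
begin

definition "EE k = {t. 0 \<le> t \<and> finite {i\<in>A. f i > t} \<and> card {i\<in>A. f i > t} \<le> k}"

lemma dr_eq: "dec_rearr A f k = Inf (EE k)"
  unfolding dec_rearr_def EE_def by simp

lemma EE_ne: "1 \<in> EE k"
proof -
  have h: "{i\<in>A. f i > 1} = {}" using fle by force
  show ?thesis unfolding EE_def mem_Collect_eq h by simp
qed

lemma bdd: "bdd_below (EE k)"
  unfolding EE_def by (rule bdd_belowI[of _ 0]) auto

lemma R0: "dec_rearr A f k \<ge> 0"
  unfolding dr_eq
proof (rule cInf_greatest)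
  show "EE k \<noteq> {}" using EE_ne by blast
qed (auto simp: EE_def)

lemma R1: "t \<in> EE k \<Longrightarrow> dec_rearr A f k \<le> t"
  unfolding dr_eq by (rule cInf_lower[OF _ bdd])

lemma R2:
  assumes "t > 0" "k < card {i\<in>A. f i > t}"
  shows "dec_rearr A f k \<ge> t"
  unfolding dr_eq
proof (rule cInf_greatest)
  show "EE k \<noteq> {}" using EE_ne by blast
  fix s assume s: "s \<in> EE k"
  show "t \<le> s"
  proof (rule ccontr)
    assume "\<not> t \<le> s"
    hence "{i\<in>A. f i > t} \<subseteq> {i\<in>A. f i > s}" by auto
    hence "card {i\<in>A. f i > t} \<le> card {i\<in>A. f i > s}"
      using s by (intro card_mono) (auto simp: EE_def)
    thus False using s assms by (auto simp: EE_def)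
  qed
qed

lemma R3:
  assumes "u > 0" "dec_rearr A f k > u"
  shows "k < card {i\<in>A. f i > u}"
proof (rule ccontr)
  assume "\<not> ?thesis"
  hence "u \<in> EE k" using assms ffin unfolding EE_def by auto
  from R1[OF this] assms show False by simp
qed

lemma R4:
  assumes "finite S" "S \<subseteq> A"
  shows "sum f S \<le> (\<Sum>k<card S. dec_rearr A f k)"
proof -
  obtain xs where xs: "distinct xs" "set xs = S"
    "\<And>i l. i \<le> l \<Longrightarrow> l < length xs \<Longrightarrow> f (xs!l) \<le> f (xs!i)"
    using sorted_enum[OF assms(1), of f] by blast
  have len: "length xs = card S" using xs distinct_card by fastforce
  have key: "f (xs!j) \<le> dec_rearr A f j" if j: "j < length xs" for j
  proof (cases "f (xs!j) > 0")
    case False thus ?thesis using R0[of j] by linarith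
  next
    case True
    show ?thesis
    proof (rule dense_le_bounded[OF True])
      fix t assume t: "0 < t" "t < f (xs!j)"
      have sub: "(\<lambda>l. xs!l) ` {..j} \<subseteq> {i\<in>A. f i > t}"
      proof
        fix x assume "x \<in> (\<lambda>l. xs!l) ` {..j}"
        then obtain l where l: "l \<le> j" "x = xs!l" by auto
        have "x \<in> S" using l j xs(2) by auto
        moreover have "f x \<ge> f (xs!j)" using xs(3)[OF l(1) j] l by simp
        ultimately show "x \<in> {i\<in>A. f i > t}" using t assms(2) by auto
      qed
      have "card ((\<lambda>l. xs!l) ` {..j}) = Suc j"
        using j xs(1) by (subst card_image) (auto simp: inj_on_def nth_eq_iff_index_eq)
      hence "Suc j \<le> card {i\<in>A. f i > t}"
        using card_mono[OF ffin[OF t(1)] sub] by simp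
      thus "t \<le> dec_rearr A f j" using R2[OF t(1)] by simp
    qed
  qed
  have "sum f S = (\<Sum>j<length xs. f (xs!j))"
  proof -
    have "sum f S = sum_list (map f xs)" using xs(1,2) sum_list_distinct_conv_sum_set by metis
    also have "\<dots> = (\<Sum>j<length xs. f (xs!j))" by (simp add: sum_list_sum_nth atLeast0LessThan)
    finally show ?thesis .
  qed
  also have "\<dots> \<le> (\<Sum>j<length xs. dec_rearr A f j)" by (intro sum_mono key) simp
  finally show ?thesis using len by simp
qed

lemma R5:
  assumes "u > 0"
  shows "(\<Sum>k<card {i\<in>A. f i > u}. dec_rearr A f k) \<le> sum f {i\<in>A. f i > u}"
proof -
  let ?C = "{i\<in>A. f i > u}"
  obtain xs where xs: "distinct xs" "set xs = ?C"
    "\<And>i l. i \<le> l \<Longrightarrow> l < length xs \<Longrightarrow> f (xs!l) \<le> f (xs!i)"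
    using sorted_enum[OF ffin[OF assms], of f] by blast
  have len: "length xs = card ?C" using xs distinct_card by fastforce
  have key: "dec_rearr A f j \<le> f (xs!j)" if j: "j < length xs" for j
  proof (rule R1)
    have xj: "xs!j \<in> ?C" using j xs(2) nth_mem by blast
    have sub: "{i\<in>A. f i > f (xs!j)} \<subseteq> (\<lambda>l. xs!l) ` {..<j}"
    proof
      fix i assume i: "i \<in> {i\<in>A. f i > f (xs!j)}"
      hence "i \<in> set xs" using xj xs(2) by auto
      then obtain l where l: "l < length xs" "i = xs!l" by (metis in_set_conv_nth)
      have "l < j"
      proof (rule ccontr)
        assume "\<not> l < j" hence "j \<le> l" by simp
        from xs(3)[OF this l(1)] i l show False by auto
      qed
      thus "i \<in> (\<lambda>l. xs!l) ` {..<j}" using l by auto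
    qed
    have "card {i\<in>A. f i > f (xs!j)} \<le> card ((\<lambda>l. xs!l) ` {..<j})"
      by (rule card_mono[OF _ sub]) simp
    also have "\<dots> \<le> j" using card_image_le[of "{..<j}"] by simp
    finally have c: "card {i\<in>A. f i > f (xs!j)} \<le> j" .
    have "f (xs!j) > 0" using xj assms by auto
    thus "f (xs!j) \<in> EE j" unfolding EE_def using c ffin by auto
  qed
  have "(\<Sum>j<length xs. dec_rearr A f j) \<le> (\<Sum>j<length xs. f (xs!j))"
    by (intro sum_mono key) simp
  also have "\<dots> = sum f ?C"
  proof -
    have "sum f ?C = sum_list (map f xs)" using xs(1,2) sum_list_distinct_conv_sum_set by metis
    also have "\<dots> = (\<Sum>j<length xs. f (xs!j))" by (simp add: sum_list_sum_nth atLeast0LessThan)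
    finally show ?thesis by simp
  qed
  finally show ?thesis using len by simp
qed

lemma R6: "(\<Sum>k<n. dec_rearr A f k) \<le> 1"
proof (cases "\<exists>k<n. dec_rearr A f k > 0")
  case False
  have "(\<Sum>k<n. dec_rearr A f k) = 0"
  proof (intro sum.neutral ballI)
    fix k assume "k \<in> {..<n}"
    thus "dec_rearr A f k = 0" using False R0[of k] by force
  qed
  thus ?thesis by simp
next
  case True
  let ?P = "{dec_rearr A f k | k. k < n \<and> dec_rearr A f k > 0}"
  have finP: "finite ?P" by simp
  have neP: "?P \<noteq> {}" using True by blast
  define u where "u = Min ?P / 2"
  have mp: "Min ?P > 0" using Min_in[OF finP neP] by auto
  hence u0: "u > 0" unfolding u_def by simp
  let ?m = "card {i\<in>A. f i > u}"
  have "(\<Sum>k<n. dec_rearr A f k) = (\<Sum>k\<in>{k. k<n \<and> dec_rearr A f k > u}. dec_rearr A f k)"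
  proof (rule sum.mono_neutral_right)
    show "\<forall>i\<in>{..<n} - {k. k < n \<and> u < dec_rearr A f k}. dec_rearr A f i = 0"
    proof
      fix i assume i: "i \<in> {..<n} - {k. k < n \<and> u < dec_rearr A f k}"
      show "dec_rearr A f i = 0"
      proof (rule ccontr)
        assume "dec_rearr A f i \<noteq> 0"
        hence "dec_rearr A f i > 0" using R0[of i] by simp
        hence "dec_rearr A f i \<in> ?P" using i by auto
        hence "Min ?P \<le> dec_rearr A f i" by (rule Min_le[OF finP])
        thus False using i mp unfolding u_def by auto
      qed
    qed
  qed auto
  also have "\<dots> \<le> (\<Sum>k<?m. dec_rearr A f k)"
  proof (rule sum_mono2)
    show "{k. k < n \<and> u < dec_rearr A f k} \<subseteq> {..<?m}" using R3[OF u0] by blast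
    show "\<And>b. b \<in> {..<?m} - {k. k < n \<and> u < dec_rearr A f k} \<Longrightarrow> 0 \<le> dec_rearr A f b"
      by (rule R0)
  qed simp
  also have "\<dots> \<le> sum f {i\<in>A. f i > u}" by (rule R5[OF u0])
  also have "\<dots> \<le> 1" by (rule fsum[OF ffin[OF u0]]) auto
  finally show ?thesis .
qed

lemma R7a: "summable (dec_rearr A f)"
  by (rule summableI_nonneg_bounded[OF R0 R6])
lemma R7b: "suminf (dec_rearr A f) \<le> 1"
  by (rule suminf_le_const[OF R7a R6])
lemmas R7 = R7a R7b

lemma R8:
  assumes "\<And>\<delta>. \<delta> > 0 \<Longrightarrow> \<exists>S. finite S \<and> S \<subseteq> A \<and> sum f S \<ge> 1 - \<delta>"
  shows "suminf (dec_rearr A f) \<ge> 1"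
proof (rule field_le_epsilon)
  fix \<delta> :: real assume "\<delta> > 0"
  then obtain S where S: "finite S" "S \<subseteq> A" "sum f S \<ge> 1 - \<delta>" using assms by blast
  have "1 - \<delta> \<le> (\<Sum>k<card S. dec_rearr A f k)" using R4[OF S(1,2)] S(3) by linarith
  also have "\<dots> \<le> suminf (dec_rearr A f)"
    by (rule sum_le_suminf[OF R7(1)]) (use R0 in auto)
  finally show "1 \<le> suminf (dec_rearr A f) + \<delta>" by simp
qed

end


definition Lset :: "'a set \<Rightarrow> nat \<Rightarrow> 'a list set" where
  "Lset F d = {xs. set xs \<subseteq> F \<and> length xs = d}"

lemma Lset_fin: "finite F \<Longrightarrow> finite (Lset F d)"
  unfolding Lset_def by (rule finite_lists_length_eq)

lemma Lset_0: "Lset F 0 = {[]}" unfolding Lset_def by auto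

lemma Lset_Suc: "Lset F (Suc d) = (\<lambda>(k,ks). k#ks) ` (F \<times> Lset F d)"
  unfolding Lset_def
  by (auto simp: length_Suc_conv image_iff)

lemma Lset_inj: "inj_on (\<lambda>(k,ks). k#ks) X"
  by (auto simp: inj_on_def)

lemma sum_Lset_prod:
  fixes g :: "'a \<Rightarrow> real"
  assumes "finite F"
  shows "(\<Sum>ks\<in>Lset F d. prod_list (map g ks)) = (sum g F)^d"
proof (induction d)
  case 0 thus ?case by (simp add: Lset_0)
next
  case (Suc d)
  have "(\<Sum>ks\<in>Lset F (Suc d). prod_list (map g ks))
      = (\<Sum>p\<in>F \<times> Lset F d. prod_list (map g ((\<lambda>(k,ks). k#ks) p)))"
    unfolding Lset_Suc by (rule sum.reindex[OF Lset_inj, unfolded comp_def])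
  also have "\<dots> = (\<Sum>k\<in>F. \<Sum>ks\<in>Lset F d. g k * prod_list (map g ks))"
    by (subst sum.cartesian_product) (simp add: case_prod_unfold)
  also have "\<dots> = sum g F * (\<Sum>ks\<in>Lset F d. prod_list (map g ks))"
    by (simp add: sum_product)
  finally show ?case using Suc by simp
qed

lemma sum_Lset_markov:
  fixes g h :: "'a \<Rightarrow> real"
  assumes "finite F" "\<And>k. k \<in> F \<Longrightarrow> g k \<ge> 0" "\<And>k. k \<in> F \<Longrightarrow> h k \<ge> 0" "sum g F \<le> 1"
  shows "(\<Sum>ks\<in>Lset F d. prod_list (map g ks) * sum_list (map h ks)) \<le> d * (\<Sum>k\<in>F. g k * h k)"
proof (induction d)
  case 0 thus ?case by (simp add: Lset_0)
next
  case (Suc d)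
  let ?P = "\<lambda>ks. prod_list (map g ks)" and ?H = "\<lambda>ks. sum_list (map h ks)"
  have g0: "sum g F \<ge> 0" using assms(2) by (simp add: sum_nonneg)
  have P1: "(\<Sum>ks\<in>Lset F d. ?P ks) \<le> 1"
    unfolding sum_Lset_prod[OF assms(1)] using g0 assms(4) by (simp add: power_le_one)
  have m0: "(\<Sum>k\<in>F. g k * h k) \<ge> 0" using assms(2,3) by (simp add: sum_nonneg)
  have "(\<Sum>ks\<in>Lset F (Suc d). ?P ks * ?H ks)
      = (\<Sum>p\<in>F \<times> Lset F d. ?P ((\<lambda>(k,ks). k#ks) p) * ?H ((\<lambda>(k,ks). k#ks) p))"
    unfolding Lset_Suc by (rule sum.reindex[OF Lset_inj, unfolded comp_def])
  also have "\<dots> = (\<Sum>k\<in>F. \<Sum>ks\<in>Lset F d. (g k * h k) * ?P ks + g k * (?P ks * ?H ks))"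
    by (subst sum.cartesian_product) (simp add: case_prod_unfold algebra_simps)
  also have "\<dots> = (\<Sum>k\<in>F. g k * h k) * (\<Sum>ks\<in>Lset F d. ?P ks)
                + sum g F * (\<Sum>ks\<in>Lset F d. ?P ks * ?H ks)"
    by (simp add: sum.distrib sum_product)
  also have "\<dots> \<le> (\<Sum>k\<in>F. g k * h k) * 1 + 1 * (d * (\<Sum>k\<in>F. g k * h k))"
  proof (rule add_mono)
    show "(\<Sum>k\<in>F. g k * h k) * (\<Sum>ks\<in>Lset F d. ?P ks) \<le> (\<Sum>k\<in>F. g k * h k) * 1"
      by (rule mult_left_mono[OF P1 m0])
    have "(\<Sum>ks\<in>Lset F d. ?P ks * ?H ks) \<ge> 0"
    proof (rule sum_nonneg)
      fix ks assume "ks \<in> Lset F d"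
      hence "set ks \<subseteq> F" by (simp add: Lset_def)
      thus "?P ks * ?H ks \<ge> 0" using assms(2,3)
        by (intro mult_nonneg_nonneg prod_list_nonneg sum_list_nonneg) auto
    qed
    thus "sum g F * (\<Sum>ks\<in>Lset F d. ?P ks * ?H ks) \<le> 1 * (d * (\<Sum>k\<in>F. g k * h k))"
      using Suc g0 assms(4) by (intro mult_mono) auto
  qed
  finally show ?case by (simp add: algebra_simps)
qed

lemma prod_list_le_1:
  fixes g :: "'a \<Rightarrow> real"
  assumes "\<And>x. x \<in> set xs \<Longrightarrow> 0 \<le> g x \<and> g x \<le> 1"
  shows "prod_list (map g xs) \<le> 1"
  using assms
proof (induction xs)
  case (Cons x xs)
  have "0 \<le> prod_list (map g xs)" using Cons.prems by (intro prod_list_nonneg) auto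
  thus ?case using Cons by (auto intro: mult_le_one)
qed simp

lemma prod_list_le_nth:
  fixes g :: "'a \<Rightarrow> real"
  assumes "\<And>x. x \<in> set xs \<Longrightarrow> 0 \<le> g x \<and> g x \<le> 1" "i < length xs"
  shows "prod_list (map g xs) \<le> g (xs!i)"
  using assms
proof (induction xs arbitrary: i)
  case Nil thus ?case by simp
next
  case (Cons x xs)
  have p0: "0 \<le> prod_list (map g xs)" using Cons.prems(1) by (intro prod_list_nonneg) auto
  have p1: "prod_list (map g xs) \<le> 1" using Cons.prems(1) by (intro prod_list_le_1) auto
  show ?case
  proof (cases i)
    case 0 thus ?thesis using Cons.prems(1)[of x] p1 by (simp add: mult_left_le)
  next
    case (Suc j)
    have "prod_list (map g xs) \<le> g (xs!j)" using Cons Suc by auto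
    moreover have "g x * prod_list (map g xs) \<le> prod_list (map g xs)"
      using Cons.prems(1)[of x] p0 by (intro mult_left_le_one_le) auto
    ultimately have "g x * prod_list (map g xs) \<le> g (xs!j)" by linarith
    thus ?thesis using Suc by simp
  qed
qed

context
  fixes lam :: "nat \<Rightarrow> real"
  assumes nonneg: "\<And>k. lam k \<ge> 0"
    and noninc: "decseq lam"
    and summ: "summable lam"
    and pos: "lam 0 > 0"
begin

abbreviation "mu \<equiv> norm_ev lam"
abbreviation "w \<equiv> (\<lambda>ks. prod_list (map mu ks))"

lemma trace_pos: "trace_ev lam > 0"
proof -
  have "lam 0 \<le> trace_ev lam"
    unfolding trace_ev_def using sum_le_suminf[OF summ, of "{0}"] nonneg by simp
  thus ?thesis using pos by simp
qed

lemma mu_nn: "mu k \<ge> 0"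
  unfolding norm_ev_def using nonneg trace_pos by simp

lemma mu_sums: "mu sums 1"
proof -
  have "lam sums trace_ev lam" unfolding trace_ev_def using summ by (rule summable_sums)
  hence "(\<lambda>k. lam k / trace_ev lam) sums (trace_ev lam / trace_ev lam)" by (rule sums_divide)
  thus ?thesis using trace_pos unfolding norm_ev_def by simp
qed

lemma mu_summable: "summable mu" using mu_sums sums_summable by blast
lemma mu_suminf: "suminf mu = 1" using mu_sums sums_unique by (metis)

lemma mu_partial: "sum mu F \<le> 1" if "finite F" for F
proof -
  have "sum mu F \<le> suminf mu" by (rule sum_le_suminf[OF mu_summable that]) (simp add: mu_nn)
  thus ?thesis using mu_suminf by simp
qed

lemma mu_le1: "mu k \<le> 1" using mu_partial[of "{k}"] by simp

lemma mu_dec: "decseq mu"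
  using noninc trace_pos unfolding norm_ev_def decseq_def by (simp add: divide_right_mono)

lemma mu_lim: "mu \<longlonglongrightarrow> 0" using mu_summable by (rule summable_LIMSEQ_zero)

lemma mu_fin: "t > 0 \<Longrightarrow> finite {k. mu k > t}"
proof -
  assume t: "t > 0"
  from mu_lim t obtain N where N: "\<forall>k\<ge>N. \<bar>mu k\<bar> < t"
    unfolding lim_sequentially dist_real_def by (metis diff_zero)
  have "{k. mu k > t} \<subseteq> {..<N}" using N by (auto simp: not_less[symmetric])
  thus ?thesis using finite_subset by blast
qed

lemma tensor_index_Lset: "tensor_index d = {ks. length ks = d}"
  by (simp add: tensor_index_def)

lemma w_nn: "w ks \<ge> 0" by (intro prod_list_nonneg) (auto simp: mu_nn)
lemma w_le1: "w ks \<le> 1" by (intro prod_list_le_1) (auto simp: mu_nn mu_le1)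
lemma w_le_mu: "x \<in> set ks \<Longrightarrow> w ks \<le> mu x"
  by (metis in_set_conv_nth prod_list_le_nth mu_nn mu_le1)

lemma w_ffin: "t > 0 \<Longrightarrow> finite {ks\<in>tensor_index d. w ks > t}"
proof -
  assume t: "t > 0"
  have "{ks\<in>tensor_index d. w ks > t} \<subseteq> Lset {k. mu k > t} d"
    unfolding Lset_def tensor_index_def using w_le_mu by fastforce
  thus ?thesis using Lset_fin[OF mu_fin[OF t]] finite_subset by blast
qed

lemma w_fsum:
  assumes "finite S" "S \<subseteq> tensor_index d"
  shows "sum w S \<le> 1"
proof -
  define M where "M = Suc (Max (insert 0 (\<Union>ks\<in>S. set ks)))"
  have fin: "finite (insert 0 (\<Union>ks\<in>S. set ks))" using assms(1) by auto
  have "S \<subseteq> Lset {..<M} d"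
  proof
    fix ks assume ks: "ks \<in> S"
    have "\<forall>x\<in>set ks. x < M"
      using ks Max_ge[OF fin] unfolding M_def by (meson UN_I insertCI le_imp_less_Suc)
    thus "ks \<in> Lset {..<M} d" using ks assms(2) by (auto simp: Lset_def tensor_index_def)
  qed
  hence "sum w S \<le> sum w (Lset {..<M} d)"
    by (intro sum_mono2 Lset_fin w_nn) auto
  also have "\<dots> = (sum mu {..<M})^d" by (rule sum_Lset_prod) simp
  also have "\<dots> \<le> 1" by (intro power_le_one sum_nonneg mu_nn mu_partial) auto
  finally show ?thesis .
qed

lemma w_approx:
  assumes "\<delta> > 0"
  shows "\<exists>S. finite S \<and> S \<subseteq> tensor_index d \<and> sum w S \<ge> 1 - \<delta>"
proof -
  have "(\<lambda>M. sum mu {..<M}) \<longlonglongrightarrow> 1" using mu_sums by (simp add: sums_def)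
  hence "(\<lambda>M. (sum mu {..<M})^d) \<longlonglongrightarrow> 1^d" by (intro tendsto_power)
  hence "\<forall>\<^sub>F M in sequentially. (sum mu {..<M})^d > 1 - \<delta>"
    using assms by (intro order_tendstoD) auto
  then obtain M where M: "(sum mu {..<M})^d > 1 - \<delta>" using eventually_sequentially by auto
  have "sum w (Lset {..<M} d) = (sum mu {..<M})^d" by (rule sum_Lset_prod) simp
  moreover have "Lset {..<M} d \<subseteq> tensor_index d" by (auto simp: Lset_def tensor_index_def)
  ultimately show ?thesis using M Lset_fin[of "{..<M}"] by (intro exI[of _ "Lset {..<M} d"]) auto
qed

abbreviation "g d \<equiv> dec_rearr (tensor_index d) w"

lemma g_eq: "tensor_norm_ev lam d = g d"
  unfolding tensor_norm_ev_def by simp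


lemma RR0: "g d k \<ge> 0" by (rule R0[of "tensor_index d" w]) (auto intro: w_nn w_le1 w_ffin w_fsum w_approx)
lemma RR3: "u > 0 \<Longrightarrow> g d k > u \<Longrightarrow> k < card {i\<in>tensor_index d. w i > u}"
  by (rule R3[of "tensor_index d" w]) (auto intro: w_nn w_le1 w_ffin w_fsum w_approx)
lemma RR4: "finite S \<Longrightarrow> S \<subseteq> tensor_index d \<Longrightarrow> sum w S \<le> (\<Sum>k<card S. g d k)"
  by (rule R4[of "tensor_index d" w]) (auto intro: w_nn w_le1 w_ffin w_fsum w_approx)
lemma RR5: "u > 0 \<Longrightarrow> (\<Sum>k<card {i\<in>tensor_index d. w i > u}. g d k) \<le> sum w {i\<in>tensor_index d. w i > u}"
  by (rule R5[of "tensor_index d" w]) (auto intro: w_nn w_le1 w_ffin w_fsum w_approx)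
lemma RR7a: "summable (g d)" by (rule R7a[of "tensor_index d" w]) (auto intro: w_nn w_le1 w_ffin w_fsum w_approx)
lemma RR7b: "suminf (g d) \<le> 1" by (rule R7b[of "tensor_index d" w]) (auto intro: w_nn w_le1 w_ffin w_fsum w_approx)
lemma RR8: "suminf (g d) \<ge> 1" by (rule R8[of "tensor_index d" w]) (auto intro: w_nn w_le1 w_ffin w_fsum w_approx)



lemma g_summable: "summable (g d)" using RR7a .
lemma g_suminf: "suminf (g d) = 1" using RR7b[of d] RR8[of d] by linarith

lemma tail_eq: "tensor_tail lam d n = 1 - (\<Sum>k<n. g d k)"
proof -
  have "suminf (g d) = (\<Sum>k. g d (k + n)) + sum (g d) {..<n}"
    by (rule suminf_split_initial_segment[OF g_summable])
  thus ?thesis unfolding tensor_tail_def g_eq using g_suminf by simp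
qed

lemma tail_card:
  assumes "finite S" "S \<subseteq> tensor_index d"
  shows "tensor_tail lam d (card S) \<le> 1 - sum w S"
  using RR4[OF assms] tail_eq by simp

lemma UBset:
  assumes "finite S" "S \<subseteq> tensor_index d" "sum w S \<ge> 1 - \<epsilon>^2"
  shows "n_X lam d \<epsilon> \<le> card S"
  unfolding n_X_def by (rule Least_le) (use tail_card[OF assms(1,2)] assms(3) in linarith)

lemma nX_tail:
  assumes "\<epsilon> > 0"
  shows "tensor_tail lam d (n_X lam d \<epsilon>) \<le> \<epsilon>^2"
proof -
  obtain S where S: "finite S" "S \<subseteq> tensor_index d" "sum w S \<ge> 1 - \<epsilon>^2"
    using w_approx[of "\<epsilon>^2" d] assms by auto
  have "tensor_tail lam d (card S) \<le> \<epsilon>^2" using tail_card[OF S(1,2)] S(3) by linarith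
  thus ?thesis unfolding n_X_def by (rule LeastI)
qed

lemma LBset:
  assumes u: "u > 0" and eta: "\<eta> > 0" and eps: "\<epsilon> > 0"
    and C: "sum w {ks\<in>tensor_index d. w ks > u} \<le> 1 - \<epsilon>^2 - \<eta>"
  shows "real (n_X lam d \<epsilon>) \<ge> \<eta> / u"
proof -
  let ?n = "n_X lam d \<epsilon>"
  let ?m = "card {ks\<in>tensor_index d. w ks > u}"
  have t: "1 - \<epsilon>^2 \<le> (\<Sum>k<?n. g d k)" using nX_tail[OF eps, of d] tail_eq by simp
  have "(\<Sum>k<?n. g d k) \<le> (\<Sum>k<?n. (if g d k > u then g d k else 0) + u)"
    by (intro sum_mono) (use u in auto)
  also have "\<dots> = (\<Sum>k<?n. (if g d k > u then g d k else 0)) + ?n * u"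
    by (simp add: sum.distrib)
  also have "(\<Sum>k<?n. (if g d k > u then g d k else 0)) = (\<Sum>k\<in>{k\<in>{..<?n}. g d k > u}. g d k)"
    by (rule sum.inter_filter[symmetric]) simp
  also have "(\<Sum>k\<in>{k\<in>{..<?n}. g d k > u}. g d k) \<le> (\<Sum>k<?m. g d k)"
  proof (rule sum_mono2)
    show "{k \<in> {..<?n}. u < g d k} \<subseteq> {..<?m}" using RR3[OF u] by blast
    show "\<And>b. b \<in> {..<?m} - {k \<in> {..<?n}. u < g d k} \<Longrightarrow> 0 \<le> g d b" by (rule RR0)
  qed simp
  also have "\<dots> \<le> sum w {ks\<in>tensor_index d. w ks > u}" by (rule RR5[OF u])
  finally have "1 - \<epsilon>^2 \<le> 1 - \<epsilon>^2 - \<eta> + ?n * u" using t C by linarith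
  hence "\<eta> \<le> ?n * u" by simp
  thus ?thesis using u by (simp add: field_simps)
qed

definition "ph x = (\<Sum>k. mu k * (if mu k < exp (- x) then 1 else 0))"
definition "FF s = {k. mu k \<ge> exp (- s)}"

lemma FF_fin: "finite (FF s)"
proof -
  have "FF s \<subseteq> {k. mu k > exp (- s) / 2}" unfolding FF_def
    by auto (smt (verit) exp_gt_zero)
  thus ?thesis using mu_fin[of "exp (- s) / 2"] finite_subset by auto
qed

lemma FF_pos: "k \<in> FF s \<Longrightarrow> mu k > 0"
proof -
  assume "k \<in> FF s" hence "exp (-s) \<le> mu k" by (simp add: FF_def)
  thus ?thesis using exp_gt_zero[of "-s"] by linarith
qed

lemma sum_FF: "sum mu (FF s) = 1 - ph s"
proof -
  let ?a = "\<lambda>k. mu k * (if mu k < exp (- s) then 0 else 1)"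
  let ?b = "\<lambda>k. mu k * (if mu k < exp (- s) then 1 else 0)"
  have sa: "suminf ?a = sum ?a (FF s)"
    by (rule suminf_finite[OF FF_fin[of s]]) (auto simp: FF_def)
  have sa2: "sum ?a (FF s) = sum mu (FF s)" by (intro sum.cong) (auto simp: FF_def)
  have suma: "summable ?a" by (rule summable_finite[OF FF_fin[of s]]) (auto simp: FF_def)
  have sumb: "summable ?b"
    by (rule summable_comparison_test'[OF mu_summable, of 0]) (auto simp: mu_nn)
  have "suminf (\<lambda>k. ?a k + ?b k) = suminf ?a + suminf ?b" by (rule suminf_add[OF suma sumb, symmetric])
  moreover have "(\<lambda>k. ?a k + ?b k) = mu" by (rule ext) auto
  ultimately show ?thesis using mu_suminf sa sa2 unfolding ph_def by simp
qed

lemma prod_list_exp: "prod_list (map (\<lambda>k. exp ((f::'a\<Rightarrow>real) k)) ks) = exp (sum_list (map f ks))"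
  by (induction ks) (simp_all add: exp_add)
definition "hh k = - ln (mu k)"

lemma hh_nn: "k \<in> FF s \<Longrightarrow> hh k \<ge> 0"
  unfolding hh_def using FF_pos mu_le1 by simp

lemma w_exp: "set ks \<subseteq> FF s \<Longrightarrow> w ks = exp (- sum_list (map hh ks))"
proof -
  assume a: "set ks \<subseteq> FF s"
  have m: "map mu ks = map (\<lambda>k. exp (- hh k)) ks"
    using a FF_pos unfolding hh_def by (intro map_cong) auto
  have "w ks = prod_list (map (\<lambda>k. exp (- hh k)) ks)" by (subst m) (rule refl)
  also have "\<dots> = exp (sum_list (map (\<lambda>k. - hh k) ks))" by (rule prod_list_exp)
  also have "sum_list (map (\<lambda>k. - hh k) ks) = - sum_list (map hh ks)"
    by (induction ks) auto
  finally show ?thesis .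
qed

lemma UBphi:
  assumes t: "t > 0"
    and H: "(1 - ph s)^d - d * (\<Sum>k\<in>FF s. mu k * hh k) / t \<ge> 1 - \<epsilon>^2"
  shows "real (n_X lam d \<epsilon>) \<le> exp t"
proof -
  let ?L = "Lset (FF s) d"
  let ?H = "\<lambda>ks. sum_list (map hh ks)"
  define S where "S = {ks\<in>?L. ?H ks \<le> t}"
  have finL: "finite ?L" by (rule Lset_fin[OF FF_fin])
  have finS: "finite S" unfolding S_def using finL by simp
  have SL: "S \<subseteq> ?L" unfolding S_def by auto
  have Hnn: "ks \<in> ?L \<Longrightarrow> ?H ks \<ge> 0" for ks
    by (intro sum_list_nonneg) (auto simp: Lset_def intro: hh_nn)
  have sL: "sum w ?L = (1 - ph s)^d" using sum_Lset_prod[OF FF_fin] sum_FF by simp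
  have "sum w (?L - S) \<le> (\<Sum>ks\<in>?L - S. w ks * ?H ks / t)"
  proof (rule sum_mono)
    fix ks assume ks: "ks \<in> ?L - S"
    hence "?H ks > t" unfolding S_def by auto
    hence "1 \<le> ?H ks / t" using t by simp
    thus "w ks \<le> w ks * ?H ks / t" using w_nn[of ks] mult_left_mono[of 1 "?H ks / t" "w ks"] by simp
  qed
  also have "\<dots> \<le> (\<Sum>ks\<in>?L. w ks * ?H ks / t)"
    by (rule sum_mono2[OF finL]) (use Hnn w_nn t in auto)
  also have "\<dots> = (\<Sum>ks\<in>?L. w ks * ?H ks) / t" by (simp add: sum_divide_distrib)
  also have "\<dots> \<le> (d * (\<Sum>k\<in>FF s. mu k * hh k)) / t"
    by (intro divide_right_mono sum_Lset_markov FF_fin mu_partial)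
       (use t hh_nn mu_nn in auto)
  finally have "sum w (?L - S) \<le> d * (\<Sum>k\<in>FF s. mu k * hh k) / t" .
  moreover have "sum w S = sum w ?L - sum w (?L - S)"
    using sum.subset_diff[OF SL finL, of w] by simp
  ultimately have S1: "sum w S \<ge> 1 - \<epsilon>^2" using H sL by linarith
  have Sidx: "S \<subseteq> tensor_index d" using SL by (auto simp: Lset_def tensor_index_def)
  have "card S * exp (- t) \<le> sum w S"
  proof -
    have "(\<Sum>ks\<in>S. exp (- t)) \<le> sum w S"
    proof (rule sum_mono)
      fix ks assume "ks \<in> S"
      hence "set ks \<subseteq> FF s" "?H ks \<le> t" unfolding S_def Lset_def by auto
      thus "exp (- t) \<le> w ks" using w_exp by simp
    qed
    thus ?thesis by simp
  qed
  also have "\<dots> \<le> 1" by (rule w_fsum[OF finS Sidx])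
  finally have "card S \<le> exp t" by (simp add: exp_minus field_simps)
  moreover have "n_X lam d \<epsilon> \<le> card S" by (rule UBset[OF finS Sidx S1])
  ultimately show ?thesis by (meson of_nat_le_iff order_trans)
qed

lemma LBphi:
  assumes eta: "\<eta> > 0" and eps: "\<epsilon> > 0"
    and H: "(1 - ph y)^D \<le> 1 - \<epsilon>^2 - \<eta>"
  shows "real (n_X lam D \<epsilon>) \<ge> \<eta> * exp y"
proof -
  let ?u = "exp (- y)"
  have sub: "{ks\<in>tensor_index D. w ks > ?u} \<subseteq> Lset (FF y) D"
    unfolding Lset_def tensor_index_def FF_def using w_le_mu by fastforce
  have "sum w {ks\<in>tensor_index D. w ks > ?u} \<le> sum w (Lset (FF y) D)"
    by (rule sum_mono2[OF Lset_fin[OF FF_fin] sub w_nn])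
  also have "\<dots> = (1 - ph y)^D" using sum_Lset_prod[OF FF_fin] sum_FF by simp
  finally have "real (n_X lam D \<epsilon>) \<ge> \<eta> / ?u"
    using H by (intro LBset[OF exp_gt_zero eta eps]) linarith
  thus ?thesis by (simp add: exp_minus divide_inverse)
qed

end


context
  fixes lam :: "nat \<Rightarrow> real"
  assumes nonneg: "\<And>k. lam k \<ge> 0"
    and noninc: "decseq lam"
    and summ: "summable lam"
    and pos: "lam 0 > 0"
begin

lemmas mu_nn' = mu_nn[OF nonneg noninc summ pos]
lemmas mu_summable' = mu_summable[OF nonneg noninc summ pos]
lemmas FF_pos' = FF_pos[OF nonneg noninc summ pos]
lemmas FF_fin' = FF_fin[OF nonneg noninc summ pos]
lemmas mu_le1' = mu_le1[OF nonneg noninc summ pos]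
lemmas ph_def' = ph_def[OF nonneg noninc summ pos]
lemmas FF_def' = FF_def[OF nonneg noninc summ pos]
lemmas hh_def' = hh_def[OF nonneg noninc summ pos]

abbreviation "ind x k \<equiv> norm_ev lam k * (if norm_ev lam k < exp (- x) then 1 else 0)"

lemma ind_summable: "summable (ind x)"
  by (rule summable_comparison_test'[OF mu_summable', of 0]) (auto simp: mu_nn')

lemma ph_mono: "x \<le> y \<Longrightarrow> ph lam y \<le> ph lam x"
  unfolding ph_def'
  by (intro suminf_le ind_summable) (auto simp: mu_nn' order.strict_trans2)

lemma ph_le1: "ph lam x \<le> 1"
proof -
  have "ph lam x \<le> suminf (norm_ev lam)"
    unfolding ph_def' by (intro suminf_le ind_summable mu_summable') (auto simp: mu_nn')
  thus ?thesis using mu_suminf[OF nonneg noninc summ pos] by simp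
qed

lemma ph_nn: "ph lam x \<ge> 0"
  unfolding ph_def' by (intro suminf_nonneg ind_summable) (auto simp: mu_nn')

lemma ph_lim: "\<delta> > 0 \<Longrightarrow> \<exists>X. \<forall>x\<ge>X. ph lam x < \<delta>"
proof -
  assume d: "\<delta> > 0"
  obtain K where K: "\<forall>n\<ge>K. norm (\<Sum>i. norm_ev lam (i + n)) < \<delta>/2"
    using suminf_exist_split[OF _ mu_summable', of "\<delta>/2"] d by auto
  have tK: "(\<Sum>i. norm_ev lam (i + K)) < \<delta>/2" using K by auto
  define X where "X = ln (2 * (real K + 1) / \<delta>)"
  have "ph lam x < \<delta>" if x: "x \<ge> X" for x
  proof -
    have "ph lam x = (\<Sum>i. ind x (i + K)) + sum (ind x) {..<K}"
      unfolding ph_def' by (rule suminf_split_initial_segment[OF ind_summable])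
    also have "(\<Sum>i. ind x (i + K)) \<le> (\<Sum>i. norm_ev lam (i + K))"
      by (intro suminf_le) (auto simp: mu_nn' intro: summable_ignore_initial_segment ind_summable mu_summable')
    also have "sum (ind x) {..<K} \<le> (\<Sum>i<K. exp (- x))"
      by (intro sum_mono) auto
    also have "(\<Sum>i<K. exp (- x)) = K * exp (- x)" by simp
    also have "K * exp (- x) < \<delta>/2"
    proof -
      have "exp (- x) \<le> exp (- X)" using x by simp
      also have "exp (- X) = \<delta> / (2 * (real K + 1))"
        unfolding X_def using d by (simp add: exp_minus)
      finally have e: "exp (- x) \<le> \<delta> / (2 * (real K + 1))" .
      have "K * exp (- x) \<le> K * (\<delta> / (2 * (real K + 1)))"
        by (rule mult_left_mono[OF e]) simp
      also have "\<dots> < \<delta>/2" using d by (simp add: field_simps)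
      finally show ?thesis .
    qed
    finally show ?thesis using tK by linarith
  qed
  thus ?thesis by blast
qed

lemma card_ceil:
  assumes "0 \<le> h" "h \<le> real j"
  shows "h \<le> real (card {i\<in>{..<j}. real i < h})"
proof -
  define n where "n = nat \<lceil>h\<rceil>"
  have hn: "h \<le> real n" unfolding n_def using assms(1) by linarith
  have nj: "n \<le> j" unfolding n_def using assms(2) by linarith
  have "{..<n} \<subseteq> {i\<in>{..<j}. real i < h}"
  proof
    fix i assume "i \<in> {..<n}"
    hence "i < n" by simp
    hence "real i \<le> real_of_int \<lceil>h\<rceil> - 1" unfolding n_def by linarith
    also have "\<dots> < h" by linarith
    finally show "i \<in> {i\<in>{..<j}. real i < h}" using \<open>i < n\<close> nj by auto
  qed
  hence "card {..<n} \<le> card {i\<in>{..<j}. real i < h}" by (intro card_mono) auto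
  hence "n \<le> card {i\<in>{..<j}. real i < h}" by simp
  thus ?thesis using hn by linarith
qed

lemma m_le: "(\<Sum>k\<in>FF lam (real j). norm_ev lam k * hh lam k) \<le> (\<Sum>i<j. ph lam (real i))"
proof -
  let ?F = "FF lam (real j)"
  have hb: "0 \<le> hh lam k \<and> hh lam k \<le> real j" if k: "k \<in> ?F" for k
  proof
    show "0 \<le> hh lam k" using hh_nn[OF nonneg noninc summ pos k] .
    have "exp (- real j) \<le> norm_ev lam k" using k by (simp add: FF_def')
    hence "ln (exp (- real j)) \<le> ln (norm_ev lam k)" using FF_pos'[OF k] by (subst ln_le_cancel_iff) auto
    thus "hh lam k \<le> real j" unfolding hh_def' by simp
  qed
  have "(\<Sum>k\<in>?F. norm_ev lam k * hh lam k)
      \<le> (\<Sum>k\<in>?F. norm_ev lam k * (\<Sum>i<j. if real i < hh lam k then 1 else 0))"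
  proof (rule sum_mono)
    fix k assume k: "k \<in> ?F"
    have "(\<Sum>i<j. if real i < hh lam k then 1 else 0::real) = real (card {i\<in>{..<j}. real i < hh lam k})"
      by (simp add: sum.If_cases Int_def conj_commute)
    hence "hh lam k \<le> (\<Sum>i<j. if real i < hh lam k then 1 else 0)"
      using card_ceil hb[OF k] by simp
    thus "norm_ev lam k * hh lam k \<le> norm_ev lam k * (\<Sum>i<j. if real i < hh lam k then 1 else 0)"
      by (intro mult_left_mono mu_nn')
  qed
  also have "\<dots> = (\<Sum>k\<in>?F. \<Sum>i<j. norm_ev lam k * (if real i < hh lam k then 1 else 0))"
    by (simp only: sum_distrib_left)
  also have "\<dots> = (\<Sum>i<j. \<Sum>k\<in>?F. norm_ev lam k * (if real i < hh lam k then 1 else 0))"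
    by (rule sum.swap)
  also have "\<dots> \<le> (\<Sum>i<j. ph lam (real i))"
  proof (rule sum_mono)
    fix i assume "i \<in> {..<j}"
    have "(\<Sum>k\<in>?F. norm_ev lam k * (if real i < hh lam k then 1 else 0)) = (\<Sum>k\<in>?F. ind (real i) k)"
    proof (rule sum.cong)
      fix k assume k: "k \<in> ?F"
      have "real i < hh lam k \<longleftrightarrow> norm_ev lam k < exp (- real i)"
      proof -
        have "real i < hh lam k \<longleftrightarrow> ln (norm_ev lam k) < - real i" unfolding hh_def' by linarith
        also have "\<dots> \<longleftrightarrow> norm_ev lam k < exp (- real i)"
          using FF_pos'[OF k] by (metis exp_less_cancel_iff exp_ln)
        finally show ?thesis .
      qed
      thus "norm_ev lam k * (if real i < hh lam k then 1 else 0) = ind (real i) k" by simp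
    qed simp
    also have "\<dots> \<le> ph lam (real i)"
      unfolding ph_def' by (rule sum_le_suminf[OF ind_summable FF_fin']) (auto simp: mu_nn')
    finally show "(\<Sum>k\<in>?F. norm_ev lam k * (if real i < hh lam k then 1 else 0)) \<le> ph lam (real i)" .
  qed
  finally show ?thesis .
qed

end


lemma karamata_step:
  fixes C N h :: real
  assumes "C \<ge> 4" "N \<ge> 10" "2 * h \<le> N + 1" "h \<ge> 0"
  shows "5/4 * (C * h + (N - h)) \<le> C * N"
proof -
  have "5/4 * (C * h + (N - h)) = 5/4 * ((C - 1) * h + N)" by (simp add: algebra_simps)
  also have "\<dots> \<le> 5/4 * ((C - 1) * ((N + 1) / 2) + N)"
    using assms by (intro mult_left_mono add_right_mono mult_left_mono) auto
  also have "\<dots> \<le> C * N"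
  proof -
    have "C * (3 * N - 5) \<ge> 4 * (3 * N - 5)" using assms by (intro mult_right_mono) auto
    hence h: "3 * (C * N) \<ge> 5 * C + 12 * N - 20" by (simp add: algebra_simps)
    have "5/4 * ((C - 1) * ((N + 1) / 2) + N) = (5 * (C * N) + 5 * C + 5 * N - 5) / 8"
      by (simp add: field_simps)
    also have "\<dots> \<le> C * N" using h assms(2) by (simp add: field_simps)
    finally show ?thesis .
  qed
  finally show ?thesis .
qed

lemma karamata:
  fixes p :: "real \<Rightarrow> real" and N1 :: nat
  assumes mono: "\<And>x y. 0 \<le> x \<Longrightarrow> x \<le> y \<Longrightarrow> p y \<le> p x"
    and nn: "\<And>x. p x \<ge> 0"
    and dbl: "\<And>x. x \<ge> x0 \<Longrightarrow> p x \<le> 5/4 * p (2 * x)"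
    and N1: "real N1 \<ge> x0" "N1 \<ge> 10" "p (2 * real N1) > 0"
  shows "\<exists>C>0. \<forall>N\<ge>N1. (\<Sum>i<N. p (real i)) \<le> C * real N * p (real N)"
proof -
  let ?S = "\<lambda>N. (\<Sum>i<N. p (real i))"
  define C where "C = max 4 (?S (2 * N1) / (real N1 * p (2 * real N1)))"
  have C4: "C \<ge> 4" unfolding C_def by simp
  have Smono: "?S m \<le> ?S n" if "m \<le> n" for m n
    by (rule sum_mono2) (use that nn in auto)
  have main: "?S N \<le> C * real N * p (real N)" if "N \<ge> N1" for N
    using that
  proof (induction N rule: less_induct)
    case (less N)
    show ?case
    proof (cases "N \<le> 2 * N1")
      case True
      have "?S N \<le> ?S (2 * N1)" by (rule Smono[OF True])
      also have "\<dots> \<le> C * (real N1 * p (2 * real N1))"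
      proof -
        have pos: "real N1 * p (2 * real N1) > 0" using N1 by simp
        have "?S (2 * N1) / (real N1 * p (2 * real N1)) \<le> C" unfolding C_def by simp
        thus ?thesis using pos by (simp add: divide_le_eq mult.commute)
      qed
      also have "\<dots> \<le> C * (real N * p (real N))"
      proof (intro mult_left_mono mult_mono)
        show "real N1 \<le> real N" using less.prems by simp
        show "p (2 * real N1) \<le> p (real N)" using True by (intro mono) auto
      qed (use C4 nn in auto)
      finally show ?thesis by (simp add: mult.assoc)
    next
      case False
      define h where "h = (N + 1) div 2"
      have hN: "h < N" "N1 \<le> h" "N \<le> 2 * h" "2 * h \<le> N + 1"
        using False N1(2) unfolding h_def by presburger+
      have IH: "?S h \<le> C * real h * p (real h)" using less.IH hN by auto
      have ph: "p (real h) \<le> 5/4 * p (real N)"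
      proof -
        have "p (real h) \<le> 5/4 * p (2 * real h)" using dbl N1 hN by simp
        also have "p (2 * real h) \<le> p (real N)" using hN by (intro mono) auto
        finally show ?thesis by simp
      qed
      have split: "?S N = ?S h + (\<Sum>i\<in>{h..<N}. p (real i))"
      proof -
        have "{..<N} = {..<h} \<union> {h..<N}" using hN by auto
        hence "?S N = (\<Sum>i\<in>{..<h} \<union> {h..<N}. p (real i))" by simp
        also have "\<dots> = ?S h + (\<Sum>i\<in>{h..<N}. p (real i))"
          by (rule sum.union_disjoint) auto
        finally show ?thesis .
      qed
      have "(\<Sum>i\<in>{h..<N}. p (real i)) \<le> (\<Sum>i\<in>{h..<N}. p (real h))"
        by (intro sum_mono mono) auto
      also have "\<dots> = real (N - h) * p (real h)" by simp
      finally have rest: "(\<Sum>i\<in>{h..<N}. p (real i)) \<le> real (N - h) * p (real h)" .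
      have "?S N \<le> C * real h * p (real h) + real (N - h) * p (real h)" using split IH rest by linarith
      also have "\<dots> = (C * real h + real (N - h)) * p (real h)" by (simp add: algebra_simps)
      also have "\<dots> \<le> (C * real h + real (N - h)) * (5/4 * p (real N))"
        by (rule mult_left_mono[OF ph]) (use C4 in auto)
      also have "\<dots> = (C * real h + (real N - real h)) * (5/4 * p (real N))"
        using hN by (simp add: of_nat_diff)
      also have "\<dots> = 5/4 * (C * real h + (real N - real h)) * p (real N)"
        by (simp add: field_simps)
      also have "\<dots> \<le> C * real N * p (real N)"
        by (rule mult_right_mono[OF karamata_step nn]) (use C4 hN N1 in auto)
      finally show ?thesis .
    qed
  qed
  show ?thesis using main C4 by (intro exI[of _ C]) auto
qed


lemma pow_lower:
  fixes x :: real
  assumes "0 \<le> x" "x \<le> 1/2"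
  shows "(1 - x)^d \<ge> exp (- (real d * (x + 2 * x^2)))"
proof -
  have "- x - 2 * x^2 \<le> ln (1 - x)" by (rule ln_one_minus_pos_lower_bound[OF assms])
  hence "real d * (- x - 2 * x^2) \<le> real d * ln (1 - x)" by (intro mult_left_mono) auto
  hence "exp (- (real d * (x + 2 * x^2))) \<le> exp (real d * ln (1 - x))" by (simp add: algebra_simps)
  also have "exp (real d * ln (1 - x)) = exp (ln (1 - x)) ^ d" by (rule exp_of_nat_mult)
  also have "\<dots> = (1 - x)^d" using assms by simp
  finally show ?thesis .
qed

lemma pow_upper:
  fixes x :: real
  assumes "0 \<le> x" "x \<le> 1"
  shows "(1 - x)^d \<le> exp (- (real d * x))"
proof -
  have "1 - x \<le> exp (- x)" using exp_ge_add_one_self[of "-x"] by simp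
  hence "(1 - x)^d \<le> exp (- x) ^ d" by (intro power_mono) (use assms in auto)
  also have "\<dots> = exp (real d * (- x))" by (rule exp_of_nat_mult[symmetric])
  finally show ?thesis by simp
qed

lemma floor_nat_ge: "x \<ge> 0 \<Longrightarrow> real (nat \<lfloor>x\<rfloor>) \<ge> x - 1"
  by linarith

context
  fixes lam :: "nat \<Rightarrow> real" and \<phi> :: "real \<Rightarrow> real" and T :: real
  assumes nonneg: "\<And>k. lam k \<ge> 0"
    and noninc: "decseq lam"
    and summ: "summable lam"
    and pos: "lam 0 > 0"
    and pe: "\<And>x. x \<ge> 0 \<Longrightarrow> ph lam x = \<phi> x"
    and sv: "slowly_varying T \<phi>"
begin

lemmas ph_mono' = ph_mono[OF nonneg noninc summ pos]
lemmas ph_nn' = ph_nn[OF nonneg noninc summ pos]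
lemmas ph_le1' = ph_le1[OF nonneg noninc summ pos]
lemmas ph_lim' = ph_lim[OF nonneg noninc summ pos]
lemmas m_le' = m_le[OF nonneg noninc summ pos]
lemmas UB' = UBphi[OF nonneg noninc summ pos]
lemmas LB' = LBphi[OF nonneg noninc summ pos]

lemma ppos: "x \<ge> max T 0 \<Longrightarrow> ph lam x > 0"
  using sv pe unfolding slowly_varying_def by auto

lemma reg:
  assumes c: "c > 0" and th: "\<theta> < 1"
  shows "\<exists>X. X \<ge> max T 0 \<and> (\<forall>x\<ge>X. ph lam (c * x) \<ge> \<theta> * ph lam x)"
proof -
  have "((\<lambda>x. \<phi> (c * x) / \<phi> x) \<longlongrightarrow> 1) at_top" using sv c unfolding slowly_varying_def by blast
  hence "\<forall>\<^sub>F x in at_top. \<phi> (c * x) / \<phi> x > \<theta>" using th by (rule order_tendstoD(1))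
  then obtain X' where X': "\<And>x. x \<ge> X' \<Longrightarrow> \<phi> (c * x) / \<phi> x > \<theta>"
    unfolding eventually_at_top_linorder by blast
  define X where "X = max X' (max T 0)"
  have "ph lam (c * x) \<ge> \<theta> * ph lam x" if x: "x \<ge> X" for x
  proof -
    have x0: "x \<ge> 0" "x \<ge> max T 0" "x \<ge> X'" using x unfolding X_def by auto
    have p: "\<phi> x > 0" using ppos[OF x0(2)] pe[OF x0(1)] by simp
    have "\<phi> (c * x) / \<phi> x > \<theta>" using X'[OF x0(3)] .
    hence "\<phi> (c * x) > \<theta> * \<phi> x" using p by (simp add: field_simps)
    thus ?thesis using pe[OF x0(1)] pe[of "c * x"] x0(1) c by simp
  qed
  thus ?thesis unfolding X_def by (intro exI[of _ "max X' (max T 0)"]) auto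
qed


lemma mainlim:
  assumes eps: "0 < \<epsilon>" "\<epsilon> < 1" and c: "c > 1"
  shows "filterlim (\<lambda>d. ln (real (n_X lam (nat \<lfloor>c * real d\<rfloor>) \<epsilon>)) / ln (real (n_X lam d \<epsilon>)))
       at_top sequentially"
proof -
  define T0 where "T0 = max T 0"
  have T00: "T0 \<ge> 0" unfolding T0_def by simp
  have e2: "0 < \<epsilon>^2" "\<epsilon>^2 < 1" using eps by (auto simp: power_less_one_iff)
  define A where "A = - ln (1 - \<epsilon>^2)"
  have eA: "exp (- A) = 1 - \<epsilon>^2" unfolding A_def using e2 by simp
  have A0: "A > 0" unfolding A_def using e2 by simp
  define r where "r = sqrt (sqrt c)"
  have r1: "r > 1" unfolding r_def using c by simp
  have r2: "r^2 = sqrt c" unfolding r_def using c by simp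
  have "r^4 = (r^2)^2" by (simp add: eval_nat_numeral)
  hence r4: "r^4 = c" using r2 c by simp
  define a where "a = A * r"
  define b where "b = A / r"
  have aA: "a > A" unfolding a_def using A0 r1 by simp
  have b0: "b > 0" unfolding b_def using A0 r1 by simp
  define \<eta> where "\<eta> = exp (- A) - exp (- a)"
  have eta0: "\<eta> > 0" unfolding \<eta>_def using aA by simp
  have ea: "exp (- a) = 1 - \<epsilon>^2 - \<eta>" unfolding \<eta>_def using eA by simp
  define b2 where "b2 = b * (1 + r) / 2"
  have b2A: "b2 < A" unfolding b2_def b_def using A0 r1 by (simp add: field_simps)
  define gap where "gap = exp (- b2) - exp (- A)"
  have gap0: "gap > 0" unfolding gap_def using b2A by simp
  obtain x0 where x0: "x0 \<ge> T0" "\<And>x. x \<ge> x0 \<Longrightarrow> ph lam (2 * x) \<ge> 4/5 * ph lam x"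
    using reg[of 2 "4/5"] unfolding T0_def by auto
  define N1 where "N1 = nat \<lceil>x0\<rceil> + 10"
  have N1x: "real N1 \<ge> x0" "N1 \<ge> 10" unfolding N1_def by linarith+
  have N1p: "ph lam (2 * real N1) > 0" using ppos N1x x0(1) T00 unfolding T0_def by simp
  obtain C where C: "C > 0" "\<And>N. N \<ge> N1 \<Longrightarrow> (\<Sum>i<N. ph lam (real i)) \<le> C * real N * ph lam (real N)"
  proof -
    have "\<exists>C>0. \<forall>N\<ge>N1. (\<Sum>i<N. ph lam (real i)) \<le> C * real N * ph lam (real N)"
    proof (rule karamata[of "ph lam" x0 N1])
      show "\<And>x y. 0 \<le> x \<Longrightarrow> x \<le> y \<Longrightarrow> ph lam y \<le> ph lam x" using ph_mono' by blast
      show "\<And>x. ph lam x \<ge> 0" by (rule ph_nn')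
      show "\<And>x. x \<ge> x0 \<Longrightarrow> ph lam x \<le> 5/4 * ph lam (2 * x)" using x0(2) by fastforce
    qed (use N1x N1p in auto)
    thus ?thesis using that by blast
  qed
  define M where "M = b * C / gap"
  have M0: "M > 0" unfolding M_def using b0 C gap0 by simp
  define y0 where "y0 = max T0 (ln (2 / \<eta>))"
  have "y0 \<ge> max T 0" unfolding y0_def T0_def by simp
  hence y0p: "ph lam y0 > 0" by (rule ppos)
  have y0e: "\<eta> * exp y0 \<ge> 2"
  proof -
    have "exp (ln (2 / \<eta>)) \<le> exp y0" unfolding y0_def by simp
    hence "2 / \<eta> \<le> exp y0" using eta0 by simp
    thus ?thesis using eta0 by (simp add: field_simps)
  qed
  show ?thesis
  unfolding filterlim_at_top
  proof
    fix Z :: real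
    define K where "K = M * (\<bar>Z\<bar> + 1)"
    have K0: "K > 0" unfolding K_def using M0 by (simp add: add_pos_nonneg)
    obtain X1 where X1: "X1 \<ge> T0" "\<And>x. x \<ge> X1 \<Longrightarrow> ph lam (2 * K * x) \<ge> 1/r * ph lam x"
      using reg[of "2 * K" "1/r"] K0 r1 unfolding T0_def by (auto simp: mult.assoc)
    define J0 where "J0 = nat \<lceil>max X1 (max (real N1) (- ln \<eta> / M))\<rceil> + 2"
    have J0: "real J0 \<ge> X1" "J0 \<ge> N1" "real J0 \<ge> - ln \<eta> / M" "J0 \<ge> 2" "real J0 \<ge> T0"
      unfolding J0_def using X1(1) by (auto; linarith)+
    have J0p: "ph lam (real J0) > 0" using ppos J0(5) unfolding T0_def by simp
    define d0 where "d0 = nat \<lceil>max (b / ph lam (real J0)) (max (4 * b / (r - 1))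
                      (max (a / ph lam y0) (max (1 / (r^4 - r^3)) (2 * b))))\<rceil> + 1"
    have "\<forall>d\<ge>d0. Z \<le> ln (real (n_X lam (nat \<lfloor>c * real d\<rfloor>) \<epsilon>)) / ln (real (n_X lam d \<epsilon>))"
    proof (intro allI impI)
      fix d assume dd: "d \<ge> d0"
      have d1: "real d > b / ph lam (real J0)" "real d > 4 * b / (r - 1)" "real d > a / ph lam y0"
        "real d > 1 / (r^4 - r^3)" "real d > 2 * b"
        using dd unfolding d0_def by (auto; linarith)+
      have dpos: "real d > 0" using d1(5) b0 by simp
      have ex: "\<exists>j. J0 \<le> j \<and> real d * ph lam (real j) \<le> b"
      proof -
        obtain X where X: "\<forall>x\<ge>X. ph lam x < b / real d" using ph_lim'[of "b / real d"] b0 dpos by auto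
        define j' where "j' = max J0 (nat \<lceil>X\<rceil>)"
        have "real j' \<ge> X" unfolding j'_def by linarith
        hence "ph lam (real j') < b / real d" using X by simp
        hence "real d * ph lam (real j') \<le> b" using dpos by (simp add: field_simps)
        moreover have "J0 \<le> j'" unfolding j'_def by simp
        ultimately show ?thesis by blast
      qed
      define j where "j = (LEAST j. J0 \<le> j \<and> real d * ph lam (real j) \<le> b)"
      have jP: "J0 \<le> j" "real d * ph lam (real j) \<le> b"
        using LeastI_ex[OF ex] unfolding j_def by auto
      have jne: "j \<noteq> J0"
      proof
        assume "j = J0"
        hence "real d * ph lam (real J0) \<le> b" using jP by simp
        moreover have "real d * ph lam (real J0) > b" using d1(1) J0p by (simp add: field_simps)
        ultimately show False by simp
      qed
      have j1: "J0 \<le> j - 1" "j - 1 < j" using jP jne by auto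
      have jm1: "real d * ph lam (real (j - 1)) > b"
        using not_less_Least[OF j1(2)[unfolded j_def]] j1(1) unfolding j_def[symmetric] by auto
      have jr: "real (j - 1) = real j - 1" using j1 J0(4) by (simp add: of_nat_diff)
      have j2: "real j \<ge> 2" "real j \<ge> real N1" "real j - 1 \<ge> X1" "real j - 1 \<ge> T0"
        "real j \<ge> - ln \<eta> / M"
        using J0 j1 jr by auto
      have phj: "ph lam (real j) \<le> b / real d" using jP(2) dpos by (simp add: field_simps)
      have phj0: "ph lam (real j) \<ge> 0" by (rule ph_nn')
      define m where "m = (\<Sum>k\<in>FF lam (real j). norm_ev lam k * hh lam k)"
      have mC: "m \<le> C * real j * ph lam (real j)"
        unfolding m_def using m_le'[of j] C(2)[of j] j2(2) by simp
      have t1: "real d * m / (M * real j) \<le> gap"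
      proof -
        have "real d * m / (M * real j) \<le> real d * (C * real j * ph lam (real j)) / (M * real j)"
          using mC dpos M0 j2(1) by (intro divide_right_mono mult_left_mono) auto
        also have "\<dots> = C * (real d * ph lam (real j)) / M" using j2(1) by (simp add: field_simps)
        also have "\<dots> \<le> C * b / M" using jP(2) C(1) M0 by (intro divide_right_mono mult_left_mono) auto
        also have "\<dots> = gap" unfolding M_def using C(1) b0 gap0 by (simp add: field_simps)
        finally show ?thesis .
      qed
      have t2: "(1 - ph lam (real j))^d \<ge> exp (- b2)"
      proof -
        have "4 * b < real d * (r - 1)" using d1(2) r1 by (simp add: pos_divide_less_eq)
        hence "b / real d \<le> (r - 1) / 4" using dpos by (simp add: field_simps)
        hence p1: "ph lam (real j) \<le> (r - 1) / 4" using phj by linarith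
        have "b / real d \<le> 1 / 2" using d1(5) dpos by (simp add: field_simps)
        hence p2: "ph lam (real j) \<le> 1/2" using phj by linarith
        have "real d * (ph lam (real j) + 2 * (ph lam (real j))^2)
             = (real d * ph lam (real j)) * (1 + 2 * ph lam (real j))" by (simp add: algebra_simps power2_eq_square)
        also have "\<dots> \<le> b * (1 + 2 * ((r - 1) / 4))"
          using jP(2) p1 phj0 b0 dpos by (intro mult_mono) auto
        also have "\<dots> = b2" unfolding b2_def by (simp add: field_simps)
        finally have "exp (- b2) \<le> exp (- (real d * (ph lam (real j) + 2 * (ph lam (real j))^2)))" by simp
        also have "\<dots> \<le> (1 - ph lam (real j))^d" by (rule pow_lower[OF phj0 p2])
        finally show ?thesis .
      qed
      have UB: "real (n_X lam d \<epsilon>) \<le> exp (M * real j)"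
      proof (rule UB'[of "M * real j" \<epsilon> "real j" d])
        show "M * real j > 0" using M0 j2(1) by simp
        show "1 - \<epsilon>^2 \<le> (1 - ph lam (real j)) ^ d -
              real d * (\<Sum>k\<in>FF lam (real j). norm_ev lam k * hh lam k) / (M * real j)"
          using t1 t2 eA unfolding m_def gap_def by linarith
      qed
      have nd2: "real (n_X lam d \<epsilon>) \<ge> 2"
      proof -
        have "(1 - ph lam y0)^d \<le> exp (- (real d * ph lam y0))"
          by (rule pow_upper[OF ph_nn' ph_le1'])
        also have "\<dots> \<le> exp (- a)"
          using d1(3) y0p by (simp add: field_simps)
        finally have "(1 - ph lam y0)^d \<le> 1 - \<epsilon>^2 - \<eta>" using ea by simp
        hence "real (n_X lam d \<epsilon>) \<ge> \<eta> * exp y0" by (rule LB'[OF eta0 eps(1)])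
        thus ?thesis using y0e by simp
      qed
      define D where "D = nat \<lfloor>c * real d\<rfloor>"
      have Dr: "real D \<ge> r^3 * real d"
      proof -
        have "real D \<ge> c * real d - 1" unfolding D_def using c dpos by (intro floor_nat_ge) simp
        moreover have "real d * (r^4 - r^3) \<ge> 1"
        proof -
          have "r^4 - r^3 > 0" using r1 by (simp add: power_strict_increasing_iff)
          thus ?thesis using d1(4) by (simp add: field_simps)
        qed
        ultimately show ?thesis using r4 by (simp add: algebra_simps)
      qed
      have phK: "ph lam (K * real j) \<ge> 1/r * ph lam (real j - 1)"
      proof -
        have "ph lam (K * real j) \<ge> ph lam (2 * K * (real j - 1))"
          using K0 j2(1) by (intro ph_mono') auto
        moreover have "ph lam (2 * K * (real j - 1)) \<ge> 1/r * ph lam (real j - 1)"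
          using X1(2) j2(3) by simp
        ultimately show ?thesis by linarith
      qed
      have DA: "real D * ph lam (K * real j) \<ge> a"
      proof -
        have "real D * ph lam (K * real j) \<ge> r^3 * real d * (1/r * ph lam (real j - 1))"
          using Dr phK r1 ph_nn'[of "real j - 1"] dpos by (intro mult_mono) auto
        also have "r^3 * real d * (1/r * ph lam (real j - 1)) = r^2 * (real d * ph lam (real j - 1))"
          using r1 by (simp add: field_simps power_def)
        also have "\<dots> \<ge> r^2 * b" using jm1 jr r1 by (intro mult_left_mono) auto
        also have "r^2 * b = a" unfolding a_def b_def using r1 by (simp add: field_simps power2_eq_square)
        finally show ?thesis by simp
      qed
      have LBD: "real (n_X lam D \<epsilon>) \<ge> \<eta> * exp (K * real j)"
      proof (rule LB'[OF eta0 eps(1)])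
        have "(1 - ph lam (K * real j))^D \<le> exp (- (real D * ph lam (K * real j)))"
          by (rule pow_upper[OF ph_nn' ph_le1'])
        also have "\<dots> \<le> exp (- a)" using DA by simp
        finally show "(1 - ph lam (K * real j))^D \<le> 1 - \<epsilon>^2 - \<eta>" using ea by simp
      qed
      have lnd_pos: "ln (real (n_X lam d \<epsilon>)) > 0" using nd2 by simp
      have lnd_up: "ln (real (n_X lam d \<epsilon>)) \<le> M * real j"
      proof -
        have "ln (real (n_X lam d \<epsilon>)) \<le> ln (exp (M * real j))"
          using UB nd2 by (subst ln_le_cancel_iff) auto
        thus ?thesis by simp
      qed
      have lnD_lo: "ln (real (n_X lam D \<epsilon>)) \<ge> ln \<eta> + K * real j"
      proof -
        have "0 < \<eta> * exp (K * real j)" using eta0 by simp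
        hence "ln (\<eta> * exp (K * real j)) \<le> ln (real (n_X lam D \<epsilon>))" using LBD by simp
        thus ?thesis using eta0 by (simp add: ln_mult)
      qed
      have "ln \<eta> + K * real j = \<bar>Z\<bar> * (M * real j) + (M * real j + ln \<eta>)"
        unfolding K_def by (simp add: algebra_simps)
      moreover have "M * real j + ln \<eta> \<ge> 0" using j2(5) M0 by (simp add: field_simps)
      moreover have "\<bar>Z\<bar> * (M * real j) \<ge> Z * ln (real (n_X lam d \<epsilon>))"
      proof -
        have "\<bar>Z\<bar> * (M * real j) \<ge> \<bar>Z\<bar> * ln (real (n_X lam d \<epsilon>))" using lnd_up by (intro mult_left_mono) auto
        moreover have "\<bar>Z\<bar> * ln (real (n_X lam d \<epsilon>)) \<ge> Z * ln (real (n_X lam d \<epsilon>))"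
          using lnd_pos by (intro mult_right_mono) auto
        ultimately show ?thesis by linarith
      qed
      ultimately have "Z * ln (real (n_X lam d \<epsilon>)) \<le> ln (real (n_X lam D \<epsilon>))" using lnD_lo by linarith
      thus "Z \<le> ln (real (n_X lam (nat \<lfloor>c * real d\<rfloor>) \<epsilon>)) / ln (real (n_X lam d \<epsilon>))"
        using lnd_pos unfolding D_def by (simp add: field_simps)
    qed
    thus "\<forall>\<^sub>F d in sequentially. Z \<le> ln (real (n_X lam (nat \<lfloor>c * real d\<rfloor>) \<epsilon>)) / ln (real (n_X lam d \<epsilon>))"
      unfolding eventually_sequentially by blast
  qed
qed

end


theorem corollary1:
  fixes lam :: "nat \<Rightarrow> real"
  assumes nonneg: "\<And>k. lam k \<ge> 0"
    and noninc: "decseq lam"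
    and summ: "summable lam"
    and pos: "lam 0 > 0"
    and sv: "\<exists>\<phi> T. slowly_varying T \<phi> \<and>
       (\<forall>x\<ge>0. (\<Sum>k. norm_ev lam k * (if norm_ev lam k < exp (- x) then 1 else 0)) = \<phi> x)"
  shows "\<forall>\<epsilon>. 0 < \<epsilon> \<and> \<epsilon> < 1 \<longrightarrow> (\<forall>c::real. c > 1 \<longrightarrow>
     filterlim (\<lambda>d. ln (real (n_X lam (nat \<lfloor>c * real d\<rfloor>) \<epsilon>)) / ln (real (n_X lam d \<epsilon>)))
       at_top sequentially)"
proof (intro allI impI)
  fix \<epsilon> c :: real
  assume e: "0 < \<epsilon> \<and> \<epsilon> < 1" and c: "c > 1"
  obtain \<phi> T where svT: "slowly_varying T \<phi>"
    and eq: "\<forall>x\<ge>0. (\<Sum>k. norm_ev lam k * (if norm_ev lam k < exp (- x) then 1 else 0)) = \<phi> x"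
    using sv by blast
  have pe: "\<And>x. x \<ge> 0 \<Longrightarrow> ph lam x = \<phi> x"
    using eq ph_def[OF nonneg noninc summ pos] by simp
  show "filterlim (\<lambda>d. ln (real (n_X lam (nat \<lfloor>c * real d\<rfloor>) \<epsilon>)) / ln (real (n_X lam d \<epsilon>)))
       at_top sequentially"
    by (rule mainlim[OF nonneg noninc summ pos pe svT]) (use e c in auto)
qed

end
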